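(* Let $\lambda\in\mathcal{X}(T)^+$ and $\mu\in\Pi_G^+(\lambda)$. Let $\alpha\in\operatorname{Supp}(\lambda)$ be such that $\langle\lambda-\mu,\alpha^\vee\rangle>r_\alpha$, let $S(\alpha)$ be the connected component containing $\alpha$ of $(\Delta(\alpha)\smallsetminus\operatorname{Supp}(\mu))\cup\{\alpha\}$, and fix an extremal root $\beta$ of $S(\alpha)$. Write $I(\alpha,\beta)=\{\gamma_0,\dots,\gamma_k\}$ with $k=d(\alpha,\beta)$, $\gamma_0=\alpha$ and $\langle\gamma_i,\gamma_{i-1}^\vee\rangle\neq0$ for $i=1,\dots,k$, and let $c_i$ be the coefficient of $\gamma_i$ in the expression of $\lambda-\mu\in\mathbb{Q}[\Delta]$ as a linear combination of simple roots. Then: (i) setting $c_{k+1}=0$, for every $i\leqslant k$ one has $c_i\geqslant\dfrac{(i+1)c_{i+1}+r_\alpha+1}{i+2}$; (ii) for every $i\leqslant k$ one has $c_i\geqslant k-i+1+\dfrac{r_\alpha-k-1}{i+2}$.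
   Context: $G$ is a connected semisimple group over an algebraically closed field of characteristic zero, $T\subset B$ a maximal torus and Borel subgroup, $\Delta$ the simple roots, $\mathcal{X}(T)^+$ the dominant characters. $\Pi_G^+(\lambda)=\{\mu\in\mathcal{X}(T)^+:\lambda-\mu\in\mathbb{Q}_{\geq0}[\Delta]\}$. $\operatorname{Supp}(\lambda)=\{\alpha\in\Delta:\langle\lambda,\alpha^\vee\rangle\neq0\}$. For $\alpha\in\Delta$, $\Delta(\alpha)$ is the connected component of the Dynkin diagram containing $\alpha$ and $r_\alpha=|\Delta(\alpha)|$; for $\beta\in\Delta(\alpha)$, $d(\alpha,\beta)$ is the distance in the Dynkin diagram and $I(\alpha,\beta)$ is the minimal connected subset of $\Delta$ containing $\alpha$ and $\beta$. Connected components of subsets of $\Delta$ refer to the Dynkin diagram. An extremal root of a subset $I\subset\Delta$ is an element of $I$ adjacent in the Dynkin diagram to at most one other element of $I$. *)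

theory Defs
  imports Main "HOL.Real"
begin

text \<open>A root system is encoded by its set of simple roots Delta and its Cartan matrix
  C a b = <a, b^vee>.  Weights (elements of X(T) tensor Q = Q[Delta]) are encoded by
  their coefficient functions w.r.t. the simple roots.\<close>

definition finite_cartan :: "'a set \<Rightarrow> ('a \<Rightarrow> 'a \<Rightarrow> int) \<Rightarrow> bool" where
  "finite_cartan D C \<longleftrightarrow> finite D \<and> D \<noteq> {}
     \<and> (\<forall>a\<in>D. C a a = 2)
     \<and> (\<forall>a\<in>D. \<forall>b\<in>D. a \<noteq> b \<longrightarrow> C a b \<le> 0)
     \<and> (\<forall>a\<in>D. \<forall>b\<in>D. C a b = 0 \<longleftrightarrow> C b a = 0)
     \<and> (\<exists>d :: 'a \<Rightarrow> real. (\<forall>a\<in>D. d a > 0)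
          \<and> (\<forall>a\<in>D. \<forall>b\<in>D. real_of_int (C a b) * d b = real_of_int (C b a) * d a)
          \<and> (\<forall>x :: 'a \<Rightarrow> real. (\<exists>a\<in>D. x a \<noteq> 0) \<longrightarrow>
               (\<Sum>a\<in>D. \<Sum>b\<in>D. x a * real_of_int (C a b) * d b * x b) > 0))"

definition pairing :: "'a set \<Rightarrow> ('a \<Rightarrow> 'a \<Rightarrow> int) \<Rightarrow> ('a \<Rightarrow> rat) \<Rightarrow> 'a \<Rightarrow> rat" where
  "pairing D C x a = (\<Sum>g\<in>D. x g * of_int (C g a))"

definition is_weight :: "'a set \<Rightarrow> ('a \<Rightarrow> 'a \<Rightarrow> int) \<Rightarrow> ('a \<Rightarrow> rat) \<Rightarrow> bool" where
  "is_weight D C x \<longleftrightarrow> (\<forall>a\<in>D. pairing D C x a \<in> \<int>)"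

definition dominant :: "'a set \<Rightarrow> ('a \<Rightarrow> 'a \<Rightarrow> int) \<Rightarrow> ('a \<Rightarrow> rat) \<Rightarrow> bool" where
  "dominant D C x \<longleftrightarrow> is_weight D C x \<and> (\<forall>a\<in>D. pairing D C x a \<ge> 0)"

definition PiPlus :: "'a set \<Rightarrow> ('a \<Rightarrow> 'a \<Rightarrow> int) \<Rightarrow> ('a \<Rightarrow> rat) \<Rightarrow> ('a \<Rightarrow> rat) set" where
  "PiPlus D C lam = {mu. dominant D C mu \<and> (\<forall>g\<in>D. lam g - mu g \<ge> 0)}"

definition Supp :: "'a set \<Rightarrow> ('a \<Rightarrow> 'a \<Rightarrow> int) \<Rightarrow> ('a \<Rightarrow> rat) \<Rightarrow> 'a set" where
  "Supp D C x = {a\<in>D. pairing D C x a \<noteq> 0}"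

definition adj :: "('a \<Rightarrow> 'a \<Rightarrow> int) \<Rightarrow> 'a \<Rightarrow> 'a \<Rightarrow> bool" where
  "adj C a b \<longleftrightarrow> a \<noteq> b \<and> C a b \<noteq> 0"

definition walk :: "('a \<Rightarrow> 'a \<Rightarrow> int) \<Rightarrow> 'a set \<Rightarrow> (nat \<Rightarrow> 'a) \<Rightarrow> nat \<Rightarrow> 'a \<Rightarrow> 'a \<Rightarrow> bool" where
  "walk C X p n a b \<longleftrightarrow> p 0 = a \<and> p n = b \<and> (\<forall>i\<le>n. p i \<in> X)
      \<and> (\<forall>i<n. adj C (p i) (p (Suc i)))"

definition comp :: "('a \<Rightarrow> 'a \<Rightarrow> int) \<Rightarrow> 'a set \<Rightarrow> 'a \<Rightarrow> 'a set" where
  "comp C X a = {b. \<exists>p n. walk C X p n a b}"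

definition connected_sub :: "('a \<Rightarrow> 'a \<Rightarrow> int) \<Rightarrow> 'a set \<Rightarrow> bool" where
  "connected_sub C S \<longleftrightarrow> (\<forall>a\<in>S. \<forall>b\<in>S. \<exists>p n. walk C S p n a b)"

definition DynComp :: "'a set \<Rightarrow> ('a \<Rightarrow> 'a \<Rightarrow> int) \<Rightarrow> 'a \<Rightarrow> 'a set" where
  "DynComp D C a = comp C D a"

definition rk :: "'a set \<Rightarrow> ('a \<Rightarrow> 'a \<Rightarrow> int) \<Rightarrow> 'a \<Rightarrow> nat" where
  "rk D C a = card (DynComp D C a)"

definition dist :: "'a set \<Rightarrow> ('a \<Rightarrow> 'a \<Rightarrow> int) \<Rightarrow> 'a \<Rightarrow> 'a \<Rightarrow> nat" where
  "dist D C a b = (LEAST n. \<exists>p. walk C D p n a b)"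

definition Iab :: "'a set \<Rightarrow> ('a \<Rightarrow> 'a \<Rightarrow> int) \<Rightarrow> 'a \<Rightarrow> 'a \<Rightarrow> 'a set" where
  "Iab D C a b = \<Inter> {S. S \<subseteq> D \<and> connected_sub C S \<and> a \<in> S \<and> b \<in> S}"

definition extremal :: "('a \<Rightarrow> 'a \<Rightarrow> int) \<Rightarrow> 'a set \<Rightarrow> 'a \<Rightarrow> bool" where
  "extremal C I b \<longleftrightarrow> b \<in> I \<and> card {g\<in>I. adj C b g} \<le> 1"

end

theory Submission
  imports Defs
begin

lemma adj_sym:
  assumes "finite_cartan D C" "a \<in> D" "b \<in> D" "adj C a b" shows "adj C b a"
  using assms unfolding finite_cartan_def adj_def by auto

lemma walk_set_connected:
  assumes fc: "finite_cartan D C" and XD: "X \<subseteq> D" and w: "walk C X p n a b"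
  shows "connected_sub C (p ` {0..n})"
proof -
  have "\<exists>q m. walk C (p`{0..n}) q m (p i) (p j)" if ij: "i \<le> n" "j \<le> n" for i j
  proof (cases "i \<le> j")
    case True
    have "walk C (p`{0..n}) (\<lambda>t. p (i+t)) (j-i) (p i) (p j)"
      unfolding walk_def
    proof (intro conjI allI impI)
      show "p (i + (j - i)) = p j" using True by simp
      fix t assume "t \<le> j - i" then show "p (i+t) \<in> p`{0..n}" using ij by auto
    next
      fix t assume "t < j - i" then have "i + t < n" using ij True \<open>t < j - i\<close> by simp
      then have "adj C (p (i+t)) (p (Suc (i+t)))" using w unfolding walk_def by blast
      then show "adj C (p (i+t)) (p (i + Suc t))" by simp
    qed simp
    then show ?thesis by blast
  next
    case False
    have "walk C (p`{0..n}) (\<lambda>t. p (i-t)) (i-j) (p i) (p j)"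
      unfolding walk_def
    proof (intro conjI allI impI)
      show "p (i - (i - j)) = p j" using False by simp
      fix t assume "t \<le> i - j" then show "p (i-t) \<in> p`{0..n}" using ij by auto
    next
      fix t assume t: "t < i - j"
      define s where "s = i - Suc t"
      have s: "s < n" "i - t = Suc s" using t ij False unfolding s_def by auto
      have "adj C (p s) (p (Suc s))" using w s unfolding walk_def by auto
      moreover have "p s \<in> D" "p (Suc s) \<in> D" using w s XD unfolding walk_def by auto
      ultimately have "adj C (p (Suc s)) (p s)" using adj_sym[OF fc] by blast
      then show "adj C (p (i-t)) (p (i - Suc t))" using s s_def by simp
    qed simp
    then show ?thesis by blast
  qed
  then show ?thesis unfolding connected_sub_def
  proof (intro ballI)
    fix a b assume H: "\<And>i j. i \<le> n \<Longrightarrow> j \<le> n \<Longrightarrow> \<exists>q m. walk C (p`{0..n}) q m (p i) (p j)"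
      and a: "a \<in> p`{0..n}" and b: "b \<in> p`{0..n}"
    from a obtain i where "i \<le> n" "a = p i" by auto
    moreover from b obtain j where "j \<le> n" "b = p j" by auto
    ultimately show "\<exists>q m. walk C (p`{0..n}) q m a b" using H by blast
  qed
qed

lemma dedup:
  fixes \<gamma> :: "nat \<Rightarrow> 'a"
  assumes "\<forall>i<m. \<gamma> (Suc i) = \<gamma> i \<or> adj C (\<gamma> i) (\<gamma> (Suc i))" and "\<forall>i\<le>m. \<gamma> i \<in> X"
  shows "\<exists>p n. walk C X p n (\<gamma> 0) (\<gamma> m) \<and> n + 1 \<le> card (\<gamma> ` {0..m})"
  using assms
proof (induction m arbitrary: \<gamma> rule: less_induct)
  case (less m)
  show ?case
  proof (cases "inj_on \<gamma> {0..m}")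
    case True
    have "\<forall>i<m. adj C (\<gamma> i) (\<gamma> (Suc i))"
    proof (intro allI impI)
      fix i assume "i<m"
      then have "\<gamma> (Suc i) \<noteq> \<gamma> i" using True by (auto dest: inj_onD)
      then show "adj C (\<gamma> i) (\<gamma> (Suc i))" using less.prems \<open>i<m\<close> by auto
    qed
    then have "walk C X \<gamma> m (\<gamma> 0) (\<gamma> m)" using less.prems by (simp add: walk_def)
    moreover have "card (\<gamma>`{0..m}) = m+1" using True by (simp add: card_image)
    ultimately show ?thesis by auto
  next
    case False
    then obtain i j where ij: "i < j" "j \<le> m" "\<gamma> i = \<gamma> j"
      unfolding inj_on_def by (metis atLeastAtMost_iff linorder_neqE_nat)
    define \<delta> where "\<delta> t = (if t \<le> i then \<gamma> t else \<gamma> (t + (j - i)))" for t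
    define m' where "m' = m - (j - i)"
    have mm: "m' < m" using ij unfolding m'_def by auto
    have h1: "\<forall>t<m'. \<delta> (Suc t) = \<delta> t \<or> adj C (\<delta> t) (\<delta> (Suc t))"
    proof (intro allI impI)
      fix t assume t: "t < m'"
      consider "t < i" | "t = i" | "t > i" by arith
      then show "\<delta> (Suc t) = \<delta> t \<or> adj C (\<delta> t) (\<delta> (Suc t))"
      proof cases
        case 1 then show ?thesis using less.prems(1) t ij unfolding \<delta>_def m'_def by auto
      next
        case 2
        have "j < m" using t 2 ij unfolding m'_def by auto
        then have "\<gamma> (Suc j) = \<gamma> j \<or> adj C (\<gamma> j) (\<gamma> (Suc j))" using less.prems(1) by auto
        moreover have "\<delta> (Suc t) = \<gamma> (Suc j)" "\<delta> t = \<gamma> j" using 2 ij unfolding \<delta>_def by auto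
        ultimately show ?thesis by simp
      next
        case 3
        have "t + (j - i) < m" using t ij unfolding m'_def by auto
        then have "\<gamma> (Suc (t + (j-i))) = \<gamma> (t + (j-i)) \<or> adj C (\<gamma> (t + (j-i))) (\<gamma> (Suc (t + (j-i))))"
          using less.prems(1) by auto
        moreover have "\<delta> (Suc t) = \<gamma> (Suc (t + (j-i)))" "\<delta> t = \<gamma> (t + (j-i))" using 3 unfolding \<delta>_def by auto
        ultimately show ?thesis by simp
      qed
    qed
    have h2: "\<forall>t\<le>m'. \<delta> t \<in> X" using less.prems(2) ij unfolding \<delta>_def m'_def by auto
    from less.IH[OF mm h1 h2] obtain p n where pn: "walk C X p n (\<delta> 0) (\<delta> m')"
      "n + 1 \<le> card (\<delta>`{0..m'})" by blast
    have "\<delta> 0 = \<gamma> 0" unfolding \<delta>_def by simp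
    moreover have "\<delta> m' = \<gamma> m"
    proof (cases "m = j")
      case True then show ?thesis using ij unfolding \<delta>_def m'_def by auto
    next
      case False then show ?thesis using ij unfolding \<delta>_def m'_def by auto
    qed
    moreover have "\<delta>`{0..m'} \<subseteq> \<gamma>`{0..m}"
    proof
      fix y assume "y \<in> \<delta>`{0..m'}"
      then obtain t where "t \<le> m'" "y = \<delta> t" by auto
      then show "y \<in> \<gamma>`{0..m}" using ij unfolding \<delta>_def m'_def
        by (cases "t \<le> i") auto
    qed
    then have "card (\<delta>`{0..m'}) \<le> card (\<gamma>`{0..m})" by (intro card_mono) auto
    ultimately show ?thesis using pn by force
  qed
qed

lemma sum_bound:
  fixes f h :: "'a \<Rightarrow> rat"
  assumes "finite D" "a \<in> D" "\<forall>g\<in>D. g \<noteq> a \<longrightarrow> f g \<le> 0" "B \<subseteq> D - {a}" "\<forall>b\<in>B. f b \<le> h b"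
  shows "sum f D \<le> f a + sum h B"
proof -
  have fin: "finite (D - {a})" using assms by auto
  have "sum f D = f a + sum f (D - {a})" using assms by (simp add: sum.remove)
  also have "sum f (D - {a}) = sum f B + sum f (D - {a} - B)"
    using sum.subset_diff[OF assms(4) fin] by (simp add: add.commute)
  also have "sum f (D - {a} - B) \<le> 0" using assms(3) by (intro sum_nonpos) auto
  also have "sum f B \<le> sum h B" using assms(5) by (intro sum_mono) auto
  finally show ?thesis by simp
qed

theorem lemma2p6:
  fixes D :: "'a set" and C :: "'a \<Rightarrow> 'a \<Rightarrow> int"
    and lam mu :: "'a \<Rightarrow> rat" and \<alpha> \<beta> :: 'a and \<gamma> :: "nat \<Rightarrow> 'a" and k :: nat
  assumes cartan: "finite_cartan D C"
    and lam_dom: "dominant D C lam"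
    and mu_in: "mu \<in> PiPlus D C lam"
    and alpha_supp: "\<alpha> \<in> Supp D C lam"
    and big: "pairing D C (\<lambda>g. lam g - mu g) \<alpha> > of_nat (rk D C \<alpha>)"
    and beta_ext: "extremal C (comp C ((DynComp D C \<alpha> - Supp D C mu) \<union> {\<alpha>}) \<alpha>) \<beta>"
    and k_def: "k = dist D C \<alpha> \<beta>"
    and gamma0: "\<gamma> 0 = \<alpha>"
    and gammaI: "\<gamma> ` {0..k} = Iab D C \<alpha> \<beta>"
    and gamma_adj: "\<forall>i\<in>{1..k}. C (\<gamma> i) (\<gamma> (i - 1)) \<noteq> 0"
  shows "let r = rat_of_nat (rk D C \<alpha>);
             c = (\<lambda>i. if i \<le> k then lam (\<gamma> i) - mu (\<gamma> i) else 0)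
         in (\<forall>i\<le>k. c i \<ge> ((of_nat i + 1) * c (i + 1) + r + 1) / (of_nat i + 2))
          \<and> (\<forall>i\<le>k. c i \<ge> of_nat k - of_nat i + 1 + (r - of_nat k - 1) / (of_nat i + 2))"

proof -
  from cartan have finD: "finite D" and C2: "\<forall>a\<in>D. C a a = 2"
    and Cneg: "\<forall>a\<in>D. \<forall>b\<in>D. a\<noteq>b \<longrightarrow> C a b \<le> 0"
    and Csym: "\<forall>a\<in>D. \<forall>b\<in>D. C a b = 0 \<longleftrightarrow> C b a = 0"
    unfolding finite_cartan_def by auto
  define X where "X = (DynComp D C \<alpha> - Supp D C mu) \<union> {\<alpha>}"
  have \<alpha>D: "\<alpha> \<in> D" using alpha_supp by (simp add: Supp_def)
  have DynD: "DynComp D C \<alpha> \<subseteq> D" unfolding DynComp_def comp_def walk_def by auto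
  have \<alpha>Dyn: "\<alpha> \<in> DynComp D C \<alpha>" unfolding DynComp_def comp_def walk_def
    using \<alpha>D by (intro CollectI exI[of _ "\<lambda>_. \<alpha>"] exI[of _ 0]) simp
  have XD: "X \<subseteq> D" using DynD \<alpha>D unfolding X_def by auto
  have XDyn: "X \<subseteq> DynComp D C \<alpha>" using \<alpha>Dyn unfolding X_def by auto
  from beta_ext have "\<beta> \<in> comp C X \<alpha>" by (simp add: extremal_def X_def)
  then obtain p n where pw: "walk C X p n \<alpha> \<beta>" by (auto simp: comp_def)
  have SX: "p ` {0..n} \<subseteq> X" using pw unfolding walk_def by auto
  have Sfam: "p ` {0..n} \<in> {S. S \<subseteq> D \<and> connected_sub C S \<and> \<alpha> \<in> S \<and> \<beta> \<in> S}"
  proof -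
    have "\<alpha> \<in> p ` {0..n}" using pw unfolding walk_def by (metis atLeastAtMost_iff image_eqI le0)
    moreover have "\<beta> \<in> p ` {0..n}" using pw unfolding walk_def by (metis atLeastAtMost_iff image_eqI le0 order_refl)
    ultimately show ?thesis using SX XD walk_set_connected[OF cartan XD pw] by auto
  qed
  have IS: "Iab D C \<alpha> \<beta> \<subseteq> p ` {0..n}" unfolding Iab_def using Sfam by (rule Inter_lower)
  have gX: "\<forall>i\<le>k. \<gamma> i \<in> X"
  proof (intro allI impI)
    fix i assume "i \<le> k" then have "\<gamma> i \<in> \<gamma>`{0..k}" by auto
    then show "\<gamma> i \<in> X" using gammaI IS SX by blast
  qed
  have gD: "\<forall>i\<le>k. \<gamma> i \<in> D" using gX XD by auto
  have \<beta>I: "\<beta> \<in> Iab D C \<alpha> \<beta>" unfolding Iab_def by auto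
  obtain j where j: "j \<le> k" "\<gamma> j = \<beta>" using gammaI \<beta>I by (metis atLeastAtMost_iff imageE)
  have Cadj2: "C (\<gamma> (i - 1)) (\<gamma> i) \<noteq> 0" if "1 \<le> i" "i \<le> k" for i
  proof -
    have "C (\<gamma> i) (\<gamma> (i - 1)) \<noteq> 0" using gamma_adj that by auto
    moreover have "\<gamma> i \<in> D" "\<gamma> (i - 1) \<in> D" using gD that by auto
    ultimately show ?thesis using Csym by blast
  qed
  have stepcond: "\<forall>i<j. \<gamma> (Suc i) = \<gamma> i \<or> adj C (\<gamma> i) (\<gamma> (Suc i))"
  proof (intro allI impI)
    fix i assume "i < j"
    then have "C (\<gamma> (Suc i - 1)) (\<gamma> (Suc i)) \<noteq> 0" using Cadj2[of "Suc i"] j by auto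
    then show "\<gamma> (Suc i) = \<gamma> i \<or> adj C (\<gamma> i) (\<gamma> (Suc i))" by (auto simp: adj_def)
  qed
  have gDj: "\<forall>i\<le>j. \<gamma> i \<in> D" using gD j by auto
  from dedup[OF stepcond gDj] obtain q n' where qn: "walk C D q n' (\<gamma> 0) (\<gamma> j)"
    "n' + 1 \<le> card (\<gamma>`{0..j})" by blast
  have "k \<le> n'" unfolding k_def dist_def
    by (rule Least_le) (use qn gamma0 j in auto)
  moreover have "card (\<gamma>`{0..j}) \<le> card (\<gamma>`{0..k})" using j by (intro card_mono) auto
  moreover have "card (\<gamma>`{0..k}) \<le> card {0..k}" by (rule card_image_le) simp
  ultimately have "card (\<gamma>`{0..k}) = card {0..k}" using qn by simp
  then have ginj: "inj_on \<gamma> {0..k}" by (intro eq_card_imp_inj_on) auto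
  have gne: "\<gamma> i \<noteq> \<gamma> t" if "i \<le> k" "t \<le> k" "i \<noteq> t" for i t
    using ginj that by (auto dest: inj_onD)
  define x where "x = (\<lambda>g. lam g - mu g)"
  have xnn: "\<forall>g\<in>D. x g \<ge> 0" using mu_in by (simp add: PiPlus_def x_def)
  have pair_sub: "pairing D C x a = pairing D C lam a - pairing D C mu a" for a
    unfolding pairing_def x_def by (simp add: sum_subtractf left_diff_distrib)
  have P0: "pairing D C x \<alpha> \<ge> of_nat (rk D C \<alpha>) + 1"
  proof -
    have "pairing D C lam \<alpha> \<in> \<int>" "pairing D C mu \<alpha> \<in> \<int>"
      using lam_dom mu_in \<alpha>D by (auto simp: dominant_def is_weight_def PiPlus_def)
    then have "pairing D C x \<alpha> \<in> \<int>" using pair_sub by simp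
    then obtain z where z: "pairing D C x \<alpha> = of_int z" by (auto elim: Ints_cases)
    have "of_int z > (of_nat (rk D C \<alpha>) :: rat)" using big z unfolding x_def by simp
    then have "z > int (rk D C \<alpha>)" by linarith
    then have "z \<ge> int (rk D C \<alpha>) + 1" by simp
    then have "(of_int z :: rat) \<ge> of_int (int (rk D C \<alpha>) + 1)" by linarith
    then show ?thesis using z by simp
  qed
  have Pi: "pairing D C x (\<gamma> i) \<ge> 0" if "1 \<le> i" "i \<le> k" for i
  proof -
    have "\<gamma> i \<noteq> \<alpha>" using gne[of i 0] that gamma0 by auto
    then have "\<gamma> i \<notin> Supp D C mu" using gX that unfolding X_def by auto
    then have "pairing D C mu (\<gamma> i) = 0" using gD that by (auto simp: Supp_def)
    moreover have "pairing D C lam (\<gamma> i) \<ge> 0" using lam_dom gD that by (auto simp: dominant_def)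
    ultimately show ?thesis using pair_sub by simp
  qed
  have rk_ge: "k + 1 \<le> rk D C \<alpha>"
  proof -
    have "card (\<gamma>`{0..k}) = k + 1" using ginj by (simp add: card_image)
    moreover have "finite (DynComp D C \<alpha>)" using DynD finD by (rule finite_subset)
    moreover have "\<gamma>`{0..k} \<subseteq> DynComp D C \<alpha>" using gX XDyn by auto
    ultimately show ?thesis unfolding rk_def by (metis card_mono)
  qed
  have nb: "x (\<gamma> t) * of_int (C (\<gamma> t) (\<gamma> i)) \<le> - x (\<gamma> t)"
    if "t \<le> k" "i \<le> k" "t + 1 = i \<or> t = i + 1" for t i
  proof -
    have "C (\<gamma> t) (\<gamma> i) \<noteq> 0"
    proof (cases "t = i + 1")
      case True
      then have t1: "t \<in> {1..k}" "t - 1 = i" using that by auto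
      from gamma_adj t1(1) have "C (\<gamma> t) (\<gamma> (t-1)) \<noteq> 0" by blast
      then show ?thesis using t1(2) by simp
    next
      case False
      then have "1 \<le> i" "i - 1 = t" using that by auto
      then show ?thesis using Cadj2[of i] that by auto
    qed
    moreover have "C (\<gamma> t) (\<gamma> i) \<le> 0" using Cneg gD gne that by auto
    ultimately have "(of_int (C (\<gamma> t) (\<gamma> i)) :: rat) \<le> -1" by simp
    moreover have "x (\<gamma> t) \<ge> 0" using xnn gD that by auto
    ultimately have "x (\<gamma> t) * of_int (C (\<gamma> t) (\<gamma> i)) \<le> x (\<gamma> t) * (-1)"
      by (intro mult_left_mono) auto
    then show ?thesis by simp
  qed
  have UB: "pairing D C x (\<gamma> i) \<le> 2 * x (\<gamma> i) - (if i = 0 then 0 else x (\<gamma> (i-1)))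
              - (if i < k then x (\<gamma> (Suc i)) else 0)" if ik: "i \<le> k" for i
  proof -
    define f where "f g = x g * of_int (C g (\<gamma> i))" for g
    have fa: "f (\<gamma> i) = 2 * x (\<gamma> i)" using C2 gD ik unfolding f_def by simp
    have fneg: "\<forall>g\<in>D. g \<noteq> \<gamma> i \<longrightarrow> f g \<le> 0"
    proof (intro ballI impI)
      fix g assume "g \<in> D" "g \<noteq> \<gamma> i"
      then have "C g (\<gamma> i) \<le> 0" using Cneg gD ik by auto
      moreover have "x g \<ge> 0" using xnn \<open>g \<in> D\<close> by auto
      ultimately show "f g \<le> 0" unfolding f_def by (simp add: mult_nonneg_nonpos)
    qed
    have pf: "pairing D C x (\<gamma> i) = sum f D" unfolding pairing_def f_def by simp
    define B where "B = (if i = 0 then {} else {\<gamma> (i-1)}) \<union> (if i < k then {\<gamma> (Suc i)} else {})"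
    have BD: "B \<subseteq> D - {\<gamma> i}" unfolding B_def using gD gne ik by auto
    have Bh: "\<forall>b\<in>B. f b \<le> - x b" unfolding B_def f_def using nb ik
      by (auto split: if_splits)
    have "sum f D \<le> f (\<gamma> i) + sum (\<lambda>b. - x b) B"
      by (rule sum_bound[OF finD _ fneg BD Bh]) (use gD ik in auto)
    also have "sum (\<lambda>b. - x b) B = - (if i = 0 then 0 else x (\<gamma> (i-1)))
              - (if i < k then x (\<gamma> (Suc i)) else 0)"
    proof -
      have "i \<noteq> 0 \<Longrightarrow> i < k \<Longrightarrow> \<gamma> (i-1) \<noteq> \<gamma> (Suc i)" using gne ik by auto
      then show ?thesis unfolding B_def by auto
    qed
    finally show ?thesis using pf fa by simp
  qed
  define r where "r = rat_of_nat (rk D C \<alpha>)"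
  define c where "c = (\<lambda>i. if i \<le> k then lam (\<gamma> i) - mu (\<gamma> i) else 0)"
  have cx: "c i = (if i \<le> k then x (\<gamma> i) else 0)" for i unfolding c_def x_def by simp
  have A0: "2 * c 0 - c 1 \<ge> r + 1"
    using UB[of 0] P0 gamma0 unfolding cx r_def by (cases "k = 0") auto
  have A1: "2 * c i - c (i - 1) - c (i + 1) \<ge> 0" if "1 \<le> i" "i \<le> k" for i
    using UB[of i] Pi[of i] that unfolding cx by (cases "i < k") auto
  have rk': "r \<ge> of_nat k + 1" using rk_ge unfolding r_def
    by (metis of_nat_Suc of_nat_le_iff Suc_eq_plus1 add.commute)
  have P: "(of_nat i + 2) * c i \<ge> (of_nat i + 1) * c (i + 1) + r + 1" if "i \<le> k" for i
    using that
  proof (induction i)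
    case 0 then show ?case using A0 by simp
  next
    case (Suc i)
    have IH: "(of_nat i + 2) * c i \<ge> (of_nat i + 1) * c (i + 1) + r + 1" using Suc by simp
    have a: "2 * c (Suc i) - c i - c (Suc i + 1) \<ge> 0" using A1[of "Suc i"] Suc.prems by simp
    have "(of_nat i + 2) * (2 * c (Suc i) - c i - c (Suc i + 1)) \<ge> 0"
      using a by simp
    then show ?case using IH by (simp add: algebra_simps)
  qed
  have Q: "(of_nat (k - d) + 2) * c (k - d) \<ge> (of_nat k - of_nat (k - d) + 1) * (of_nat (k - d) + 2) + r - of_nat k - 1"
    if "d \<le> k" for d
    using that
  proof (induction d)
    case 0 then show ?case using P[of k] unfolding cx by (simp add: algebra_simps)
  next
    case (Suc d)
    define i where "i = k - Suc d"
    have i1: "k - d = i + 1" using Suc.prems unfolding i_def by simp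
    have ik: "i \<le> k" unfolding i_def by simp
    define I where "I = (of_nat i :: rat)"
    define K where "K = (of_nat k :: rat)"
    have KI: "of_nat (k - d) = I + 1" unfolding I_def using i1 by simp
    have IH: "(I + 3) * c (i+1) \<ge> (K - I) * (I + 3) + r - K - 1"
      using Suc KI i1 unfolding K_def by (simp add: algebra_simps)
    have Pi': "(I + 2) * c i \<ge> (I + 1) * c (i + 1) + r + 1" using P[OF ik] unfolding I_def by simp
    have I0: "I \<ge> 0" unfolding I_def by simp
    have rK: "r \<ge> K + 1" using rk' unfolding K_def by simp
    have m1: "(I + 3) * ((I + 2) * c i) \<ge> (I + 3) * ((I + 1) * c (i + 1) + r + 1)"
      using Pi' I0 by (intro mult_left_mono) auto
    have m2: "(I + 1) * ((I + 3) * c (i+1)) \<ge> (I + 1) * ((K - I) * (I + 3) + r - K - 1)"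
      using IH I0 by (intro mult_left_mono) auto
    have m3: "(I + 1) * (r - K - 1) \<ge> 0" using I0 rK by simp
    have "(I + 3) * ((I + 2) * c i) \<ge> (I + 3) * ((K - I + 1) * (I + 2) + r - K - 1)"
    proof -
      have e1: "(I + 3) * ((I + 1) * c (i + 1) + r + 1) = (I + 1) * ((I + 3) * c (i+1)) + (I+3)*(r+1)"
        by (simp add: algebra_simps)
      have e2: "(I + 3) * ((K - I + 1) * (I + 2) + r - K - 1) = (I + 1) * ((K - I) * (I + 3) + r - K - 1) + (I+3)*(r+1) - (I + 1) * (r - K - 1)"
        by (simp add: algebra_simps)
      show ?thesis using m1 m2 m3 e1 e2 by linarith
    qed
    then have "(I + 2) * c i \<ge> (K - I + 1) * (I + 2) + r - K - 1"
      using I0 by (subst (asm) mult_le_cancel_left_pos) auto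
    then show ?case unfolding i_def[symmetric] I_def K_def by simp
  qed
  have part1: "\<forall>i\<le>k. c i \<ge> ((of_nat i + 1) * c (i + 1) + r + 1) / (of_nat i + 2)"
  proof (intro allI impI)
    fix i assume "i \<le> k"
    then show "c i \<ge> ((of_nat i + 1) * c (i + 1) + r + 1) / (of_nat i + 2)"
      using P[of i] by (subst pos_divide_le_eq) (auto simp: mult.commute)
  qed
  have part2: "\<forall>i\<le>k. c i \<ge> of_nat k - of_nat i + 1 + (r - of_nat k - 1) / (of_nat i + 2)"
  proof (intro allI impI)
    fix i assume ik: "i \<le> k"
    have q: "(of_nat i + 2) * c i \<ge> (of_nat k - of_nat i + 1) * (of_nat i + 2) + r - of_nat k - 1"
      using Q[of "k - i"] ik by simp
    have "(r - of_nat k - 1) / (of_nat i + 2) \<le> c i - (of_nat k - of_nat i + 1)"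
      using q by (subst pos_divide_le_eq) (auto simp: algebra_simps)
    then show "c i \<ge> of_nat k - of_nat i + 1 + (r - of_nat k - 1) / (of_nat i + 2)" by linarith
  qed
  show ?thesis unfolding Let_def r_def[symmetric] c_def[symmetric] using part1 part2 by blast
qed

end
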